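(* Let $m$ be a positive integer and $c\in\mathbb{F}_{2^m}^*$. Then the polynomial \[ g(x)=x^{2^{m}(2^{2m}+1)}+x^{2^{2m}+1}+cx \] is a permutation polynomial of $\mathbb{F}_{2^{3m}}$.
   Context: A polynomial $f\in\mathbb{F}_Q[x]$ is a permutation polynomial of $\mathbb{F}_Q$ if the map $c\mapsto f(c)$ is a bijection of $\mathbb{F}_Q$. $\mathbb{F}_{2^m}$ is viewed as the subfield of $\mathbb{F}_{2^{3m}}$. *)

theory Defs
  imports "HOL-Computational_Algebra.Polynomial"
begin

definition permutation_polynomial :: "'a::field poly \<Rightarrow> bool" where
  "permutation_polynomial f \<longleftrightarrow> bij (poly f)"

definition is_subfield :: "'a::field set \<Rightarrow> bool" where
  "is_subfield K \<longleftrightarrow> 0 \<in> K \<and> 1 \<in> K \<and>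
     (\<forall>x\<in>K. \<forall>y\<in>K. x + y \<in> K \<and> x * y \<in> K) \<and>
     (\<forall>x\<in>K. - x \<in> K \<and> inverse x \<in> K)"

end

theory Submission imports Defs "HOL-Number_Theory.Residues" "HOL-Computational_Algebra.Primes" begin


hide_const (open) UnivPoly.monom

lemma char2_inj:
  fixes F :: "'a::field \<Rightarrow> 'a" and c :: 'a
  assumes two: "\<And>a::'a. a + a = 0"
    and add: "\<And>x y. F (x+y) = F x + F y" and mult: "\<And>x y. F (x*y) = F x * F y"
    and per: "\<And>x. F (F (F x)) = x" and cF: "F c = c" and c0: "c \<noteq> 0"
  shows "inj (\<lambda>x. x * (F x + F (F x) + c))"
proof -
  have neg: "\<And>a::'a. - a = a" using two by (metis add_eq_0_iff)
  have two2: "(2::'a) = 0" by (metis one_add_one two)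
  have sub: "\<And>a b::'a. a - b = a + b" by (metis diff_conv_add_uminus neg)
  define T where "T x = x + F x + F (F x)" for x
  have Tadd: "T (x+y) = T x + T y" for x y unfolding T_def add by (simp add: algebra_simps)
  have TF: "F (T x) = T x" for x unfolding T_def add per by (simp add: algebra_simps)
  have sq: "(a + b) * (a + b) = a*a + b*b" for a b :: 'a
  proof -
    have "(a+b)*(a+b) = a*a + b*b + (a*b + a*b)" by (simp add: algebra_simps)
    thus ?thesis using two by simp
  qed
  have sq3: "(a + b + d) * (a + b + d) = a*a + b*b + d*d" for a b d :: 'a
    using sq by metis
  have Tsq: "T (x*x) = T x * T x" for x unfolding T_def mult sq3 ..
  have Tlin: "F s = s \<Longrightarrow> T (s*x) = s * T x" for s x
    unfolding T_def mult by (simp add: algebra_simps)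
  define g where "g x = x * (F x + F (F x) + c)" for x
  have gT: "T (g x) = c * T x" for x
  proof -
    define s where "s = T x + c"
    have Fs: "F s = s" unfolding s_def add TF cF ..
    have "x*x + s*x = g x + (x*x + x*x)" unfolding g_def s_def T_def by (simp add: algebra_simps)
    hence "g x = x*x + s*x" using two by simp
    hence "T (g x) = T x * T x + s * T x" using Tadd Tsq Tlin[OF Fs] by simp
    also have "\<dots> = c * T x" unfolding s_def by (simp add: algebra_simps two)
    finally show ?thesis .
  qed
  show ?thesis
  proof (rule injI)
    fix x y assume "x * (F x + F (F x) + c) = y * (F y + F (F y) + c)"
    hence gxy: "g x = g y" unfolding g_def .
    hence "c * T x = c * T y" using gT by metis
    hence Txy: "T x = T y" using c0 by simp
    define s where "s = T x + c"
    have Fs: "F s = s" unfolding s_def add TF cF ..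
    have gx: "g z = z*z + (T z + c)*z" for z
    proof -
      have "z*z + (T z + c)*z = g z + (z*z + z*z)" unfolding g_def T_def by (simp add: algebra_simps)
      thus ?thesis using two by simp
    qed
    have "x*x + s*x = y*y + s*y" using gxy gx Txy unfolding s_def by metis
    hence e: "x*x + s*x = y*y + s*y" .
    have "(x+y)*(x+y+s) = (x*x + s*x) + (y*y + s*y) + (x*y + x*y)" by (simp add: algebra_simps)
    hence "(x+y)*(x+y+s) = 0" unfolding e using two by simp
    hence "x + y = 0 \<or> x + y + s = 0" by simp
    thus "x = y"
    proof
      assume "x + y = 0" thus ?thesis by (metis add_eq_0_iff neg)
    next
      assume h: "x + y + s = 0"
      hence ys: "y = x + s" by (metis add_eq_0_iff neg add.assoc add.commute)
      have "T s = s" unfolding T_def Fs using two[of s] by (metis add.assoc add_0_right)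
      hence "T y = T x + s" using ys Tadd by simp
      hence "s = 0" using Txy by simp
      thus ?thesis using ys by simp
    qed
  qed
qed
lemma char2_of_card:
  assumes "card (UNIV :: 'a::{field,finite} set) = 2 ^ k"
  shows "\<And>a::'a. a + a = 0"
proof -
  have pos: "CHAR('a) > 0" by (rule finite_imp_CHAR_pos) simp
  have pr: "prime CHAR('a)" by (rule prime_CHAR_semidom[OF pos])
  have "CHAR('a) dvd 2 ^ k" using CHAR_dvd_CARD assms by metis
  hence "CHAR('a) dvd 2" using pr prime_dvd_power by blast
  hence c2: "CHAR('a) = 2" by (metis primes_dvd_imp_eq pr two_is_prime_nat)
  have "of_nat 2 = (0::'a)" using of_nat_CHAR[where 'a='a] c2 by simp
  hence "(1::'a) + 1 = 0" by simp
  fix a :: 'a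
  have "a + a = a * (1 + 1)" by (simp add: algebra_simps)
  thus "a + a = 0" using \<open>(1::'a) + 1 = 0\<close> by simp
qed

lemma fermat_set:
  fixes S :: "'a::field set" and c :: 'a
  assumes "finite S" "0 \<notin> S" "c \<in> S" "\<And>y. y \<in> S \<Longrightarrow> c * y \<in> S"
  shows "c ^ card S = 1"
proof -
  have c0: "c \<noteq> 0" using assms by auto
  have inj: "inj_on (\<lambda>y. c * y) S" using c0 by (auto simp: inj_on_def)
  have sub: "(\<lambda>y. c * y) ` S \<subseteq> S" using assms by auto
  have eq: "(\<lambda>y. c * y) ` S = S"
    using card_image[OF inj] sub assms(1) by (simp add: card_subset_eq)
  have "prod (\<lambda>y. y) S = prod (\<lambda>y. y) ((\<lambda>y. c * y) ` S)" using eq by simp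
  also have "\<dots> = prod (\<lambda>y. c * y) S" using prod.reindex[OF inj] by simp
  also have "\<dots> = c ^ card S * prod (\<lambda>y. y) S" by (simp add: prod.distrib)
  finally have "prod (\<lambda>y. y) S = c ^ card S * prod (\<lambda>y. y) S" .
  moreover have "prod (\<lambda>y. y) S \<noteq> 0" using assms(1,2) by (metis prod_zero_iff)
  ultimately show ?thesis by simp
qed

lemma frob:
  fixes x y :: "'a::field"
  assumes two: "\<And>a::'a. a + a = 0"
  shows "(x + y) ^ (2 ^ k) = x ^ (2 ^ k) + y ^ (2 ^ k)"
proof (induction k)
  case 0 then show ?case by simp
next
  case (Suc k)
  have sq: "(a + b) ^ 2 = a ^ 2 + b ^ 2" for a b :: 'a
  proof -
    have "(a+b)^2 = a^2 + b^2 + (a*b + a*b)" by (simp add: power2_eq_square algebra_simps)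
    thus ?thesis using two by simp
  qed
  have "(x + y) ^ (2 ^ Suc k) = ((x + y) ^ (2 ^ k)) ^ 2" by (simp add: power_mult[symmetric] mult.commute)
  also have "\<dots> = (x ^ (2 ^ k)) ^ 2 + (y ^ (2 ^ k)) ^ 2" using Suc sq by simp
  also have "\<dots> = x ^ (2 ^ Suc k) + y ^ (2 ^ Suc k)" by (simp add: power_mult[symmetric] mult.commute)
  finally show ?case .
qed

theorem corollary1:
  fixes m :: nat and c :: "'a::{field,finite}" and K :: "'a set"
  assumes "m > 0"
    and "card (UNIV :: 'a set) = 2 ^ (3 * m)"
    and "is_subfield K" and "card K = 2 ^ m"
    and "c \<in> K" and "c \<noteq> 0"
  shows "permutation_polynomial
           (monom 1 (2 ^ m * (2 ^ (2 * m) + 1)) + monom 1 (2 ^ (2 * m) + 1) + monom c 1)"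
proof -
  define q :: nat where "q = 2 ^ m"
  have q1: "q \<ge> 1" unfolding q_def by simp
  have two: "\<And>a::'a. a + a = 0" using char2_of_card[OF assms(2)] .
  define F :: "'a \<Rightarrow> 'a" where "F x = x ^ q" for x
  have add: "F (x+y) = F x + F y" for x y unfolding F_def q_def using frob[OF two] .
  have mult: "F (x*y) = F x * F y" for x y unfolding F_def by (simp add: power_mult_distrib)
  have cardU: "card (UNIV :: 'a set) = q * q * q" unfolding q_def assms(2)
    by (simp add: power_mult[symmetric] power_add[symmetric] mult.commute)
  have fullx: "x ^ (q*q*q) = x" for x :: 'a
  proof (cases "x = 0")
    case True thus ?thesis using q1 by simp
  next
    case False
    have "x ^ card (UNIV - {0::'a}) = 1"
      by (rule fermat_set) (use False in auto)
    moreover have "card (UNIV - {0::'a}) = q*q*q - 1" using cardU by (simp add: card_Diff_singleton)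
    ultimately have "x ^ (q*q*q - 1) = 1" by simp
    hence "x * x ^ (q*q*q - 1) = x" by simp
    moreover have "q*q*q = Suc (q*q*q - 1)" using q1 by (simp add: Suc_le_eq)
    ultimately show ?thesis by (metis power_Suc)
  qed
  have per: "F (F (F x)) = x" for x unfolding F_def using fullx by (simp add: power_mult[symmetric])
  have sf: "0 \<in> K" "1 \<in> K" "\<And>x y. x \<in> K \<Longrightarrow> y \<in> K \<Longrightarrow> x * y \<in> K"
    using assms(3) unfolding is_subfield_def by auto
  have finK: "finite K" by simp
  have "c ^ card (K - {0}) = 1"
    by (rule fermat_set) (use assms(5,6) sf in auto)
  moreover have "card (K - {0}) = q - 1" using sf(1) assms(4) q_def by (simp add: card_Diff_singleton)
  ultimately have "c ^ (q - 1) = 1" by simp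
  hence "c * c ^ (q - 1) = c" by simp
  moreover have "q = Suc (q - 1)" using q1 by simp
  ultimately have cF: "F c = c" unfolding F_def by (metis power_Suc)
  have inj: "inj (\<lambda>x. x * (F x + F (F x) + c))"
    by (rule char2_inj[OF two add mult per cF assms(6)])
  have pe: "poly (monom 1 (2 ^ m * (2 ^ (2 * m) + 1)) + monom 1 (2 ^ (2 * m) + 1) + monom c 1) x
      = x * (F x + F (F x) + c)" for x
  proof -
    have e1: "2 ^ m * (2 ^ (2 * m) + 1) = q*q*q + q" unfolding q_def
      by (simp add: algebra_simps power_mult[symmetric] power_add[symmetric])
    have e2: "2 ^ (2 * m) + 1 = q*q + (1::nat)" unfolding q_def
      by (simp add: power_mult[symmetric] power_add[symmetric] mult.commute)
    have "poly (monom 1 (2 ^ m * (2 ^ (2 * m) + 1)) + monom 1 (2 ^ (2 * m) + 1) + monom c 1) x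
        = x ^ (2 ^ m * (2 ^ (2 * m) + 1)) + x ^ (2 ^ (2 * m) + 1) + c * x"
      by (simp add: poly_monom)
    also have "\<dots> = x ^ (q*q*q + q) + x ^ (q*q + 1) + c * x" unfolding e1 unfolding e2 ..
    also have "\<dots> = x ^ (q*q*q) * x ^ q + x ^ (q*q) * x + c * x" by (simp only: power_add power_one_right)
    also have "\<dots> = x * (F x + F (F x) + c)" unfolding F_def fullx
      by (simp add: power_mult[symmetric] algebra_simps)
    finally show ?thesis .
  qed
  have "inj (poly (monom 1 (2 ^ m * (2 ^ (2 * m) + 1)) + monom 1 (2 ^ (2 * m) + 1) + monom c (1::nat)))"
    using inj unfolding pe[abs_def] .
  thus ?thesis unfolding permutation_polynomial_def bij_def using finite_UNIV_inj_surj[OF finite_UNIV] by blast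
qed
end
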